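(* Assume the structure is rigid. Fix $\zeta=(\xi,\eta)\in\Omega$ and let $Z(z,\zeta):=(y-\eta)-i(z)(x-\xi)$, $d\tilde z:=dy-i(z)\,dx$, and $j(\zeta):=\frac{2i(\zeta)+\beta(\zeta)}{\sqrt{\Delta(\zeta)}}\in A_\zeta$. Then \[ \lim_{r\to0^+}\int^{(\zeta)}_{\partial B_r(\zeta)}Z(z,\zeta)^{-1}\,d\tilde z=2\pi\,j(\zeta)\quad\text{in }A_\zeta, \] where $\partial B_r(\zeta)$ is the positively oriented circle of radius $r$.
   Context: Let $\Omega\subset\mathbb R^2$ be open with coordinates $(x,y)$, $\alpha,\beta\in C^1(\Omega,\mathbb R)$ with $\Delta:=4\alpha-\beta^2>0$ on $\Omega$. For $z\in\Omega$ let $A_z:=\mathbb R[X]/(X^2+\beta(z)X+\alpha(z))$ and $i(z)$ the class of $X$, so $i^2+\beta i+\alpha=0$ and $\{1,i(z)\}$ is a real basis; sections $h=u+v\,i$ ($u,v$ real functions) are multiplied fiberwise. The derivatives of the generator are $i_x:=-(\alpha_x+\beta_x i)(2i+\beta)^{-1}$, $i_y:=-(\alpha_y+\beta_y i)(2i+\beta)^{-1}$; the structure is rigid if $i_x+i\,i_y=0$ on $\Omega$. Coefficientwise integral into a fixed fiber: for a section $h=u+v\,i$ and a piecewise $C^1$ curve $\gamma$, using $i^2=-\beta i-\alpha$ one has $h\,d\tilde z=(u\,dy+v\alpha\,dx)+(v\,dy-u\,dx+v\beta\,dx)\,i$, and one defines \[ \int^{(\zeta)}_\gamma h\,d\tilde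 z:=\Bigl(\int_\gamma u\,dy+v\alpha\,dx\Bigr)+\Bigl(\int_\gamma v\,dy-u\,dx+v\beta\,dx\Bigr)\,i(\zeta)\in A_\zeta . \] For $z\neq\zeta$, $Z(z,\zeta)$ is invertible in $A_z$. *)

theory Defs
  imports "HOL-Analysis.Analysis"
begin

text \<open>An element u + v i(z) of the fibre algebra A_z = R[X]/(X^2 + beta(z) X + alpha(z))
  is represented by its coordinate pair (u, v) in the basis {1, i(z)}.
  The fibre structure is given by the numbers a = alpha(z), b = beta(z).\<close>

type_synonym fib = "real \<times> real"

definition amult :: "real \<Rightarrow> real \<Rightarrow> fib \<Rightarrow> fib \<Rightarrow> fib" where
  "amult a b p q = (fst p * fst q - a * snd p * snd q,
                    fst p * snd q + snd p * fst q - b * snd p * snd q)"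

definition ainv :: "real \<Rightarrow> real \<Rightarrow> fib \<Rightarrow> fib" where
  "ainv a b p = (THE w. amult a b p w = (1, 0))"

definition agen :: fib where "agen = (0, 1)"

text \<open>i_x = -(alpha_x + beta_x i)(2i+beta)^{-1}, in the fibre at z.\<close>
definition i_deriv :: "real \<Rightarrow> real \<Rightarrow> real \<Rightarrow> real \<Rightarrow> fib" where
  "i_deriv a b da db = amult a b (- da, - db) (ainv a b (b, 2))"

definition rigid ::
  "(real \<times> real) set \<Rightarrow> (real \<times> real \<Rightarrow> real) \<Rightarrow> (real \<times> real \<Rightarrow> real) \<Rightarrow>
   (real \<times> real \<Rightarrow> real) \<Rightarrow> (real \<times> real \<Rightarrow> real) \<Rightarrow>
   (real \<times> real \<Rightarrow> real) \<Rightarrow> (real \<times> real \<Rightarrow> real) \<Rightarrow> bool" where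
  "rigid \<Omega> \<alpha> \<beta> \<alpha>x \<alpha>y \<beta>x \<beta>y \<longleftrightarrow>
     (\<forall>z\<in>\<Omega>. i_deriv (\<alpha> z) (\<beta> z) (\<alpha>x z) (\<beta>x z)
              + amult (\<alpha> z) (\<beta> z) agen (i_deriv (\<alpha> z) (\<beta> z) (\<alpha>y z) (\<beta>y z)) = (0, 0))"

text \<open>Z(z,zeta) = (y - eta) - i(z)(x - xi), as an element of A_z.\<close>
definition Zfun :: "real \<times> real \<Rightarrow> real \<times> real \<Rightarrow> fib" where
  "Zfun z \<zeta> = (snd z - snd \<zeta>, - (fst z - fst \<zeta>))"

definition circ :: "real \<times> real \<Rightarrow> real \<Rightarrow> real \<Rightarrow> real \<times> real" where
  "circ \<zeta> r t = (fst \<zeta> + r * cos t, snd \<zeta> + r * sin t)"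

text \<open>Coefficientwise integral of a section h = u + v i over the circle, landing in A_zeta
  (returned as coordinates w.r.t. {1, i(zeta)}):
  (int u dy + v alpha dx) + (int v dy - u dx + v beta dx) i(zeta).\<close>
definition circ_int ::
  "(real \<times> real \<Rightarrow> real) \<Rightarrow> (real \<times> real \<Rightarrow> real) \<Rightarrow> real \<times> real \<Rightarrow> real \<Rightarrow>
   (real \<times> real \<Rightarrow> fib) \<Rightarrow> fib" where
  "circ_int \<alpha> \<beta> \<zeta> r h =
     (let x' = (\<lambda>t. - r * sin t); y' = (\<lambda>t. r * cos t);
          u = (\<lambda>t. fst (h (circ \<zeta> r t))); v = (\<lambda>t. snd (h (circ \<zeta> r t)));
          a = (\<lambda>t. \<alpha> (circ \<zeta> r t)); b = (\<lambda>t. \<beta> (circ \<zeta> r t))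
      in (integral {0..2*pi} (\<lambda>t. u t * y' t + v t * a t * x' t),
          integral {0..2*pi} (\<lambda>t. v t * y' t - u t * x' t + v t * b t * x' t)))"

end

theory Submission
  imports Defs
begin

definition Dn :: "real \<Rightarrow> real \<Rightarrow> real \<Rightarrow> real" where
  "Dn e d t = (sin t)^2 + 2 * e * sin t * cos t + (d^2+e^2) * (cos t)^2"
definition Kf :: "real \<Rightarrow> real \<Rightarrow> real \<Rightarrow> real" where
  "Kf e d t = e * ((cos t)^2 - (sin t)^2) + (1-(d^2+e^2)) * sin t * cos t"
definition Gf :: "real \<Rightarrow> real \<Rightarrow> real \<Rightarrow> real" where
  "Gf e d t = t + arctan (Kf e d t / (Dn e d t + d))"

lemma key_identity1:
  fixes s c e d :: real
  shows "((s^2 + 2 * e * s * c + (d^2 + e^2) * c^2)+d * (s^2+c^2))^2 + (e * (c^2 - s^2) + (1-(d^2 + e^2)) * s * c)^2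
     = ((d^2 + e^2)+1+2 * d) * (s^2+c^2) * (s^2 + 2 * e * s * c + (d^2 + e^2) * c^2)"
  by algebra

lemma key_identity2:
  fixes s c e d :: real
  shows "((d^2 + e^2)+1+2 * d) * (s^2 + 2 * e * s * c + (d^2 + e^2) * c^2) * (s^2+c^2)
       + (-4 * e * s * c + (1-(d^2 + e^2)) * (c^2 - s^2)) * ((s^2 + 2 * e * s * c + (d^2 + e^2) * c^2)+d * (s^2+c^2))
       - (e * (c^2 - s^2) + (1-(d^2 + e^2)) * s * c) * (2 * s * c + 2 * e * (c^2 - s^2) - 2 * (d^2 + e^2) * c * s)
       = d * ((d^2 + e^2)+1+2 * d) * (s^2+c^2)^2"
  by algebra

lemma Dn_pos: assumes "d > 0" shows "Dn e d t > 0"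
proof -
  have eq: "Dn e d t = (sin t + e * cos t)^2 + d^2 * (cos t)^2"
    unfolding Dn_def by (simp add: algebra_simps power2_eq_square)
  show ?thesis
  proof (cases "cos t = 0")
    case True
    then have "(sin t)^2 = 1" using sin_cos_squared_add[of t] by simp
    then show ?thesis using True by (simp add: Dn_def)
  next
    case False
    then have "d^2 * (cos t)^2 > 0" using assms by simp
    then show ?thesis unfolding eq by (smt (verit) zero_le_power2)
  qed
qed

lemma Dn_deriv: "(Dn e d has_real_derivative
   (2 * sin t * cos t + 2 * e * ((cos t)^2 - (sin t)^2) - 2 * (d^2 + e^2) * cos t * sin t)) (at t)"
  unfolding Dn_def
  by (auto intro!: derivative_eq_intros simp: power2_eq_square algebra_simps)

lemma Kf_deriv: "(Kf e d has_real_derivative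
   (-4 * e * sin t * cos t + (1-(d^2 + e^2)) * ((cos t)^2 - (sin t)^2))) (at t)"
  unfolding Kf_def
  by (auto intro!: derivative_eq_intros simp: power2_eq_square algebra_simps)

lemma G_deriv_gen:
  assumes "(D has_real_derivative D') (at t)" "(K has_real_derivative K') (at t)" "D t + d \<noteq> 0"
  shows "((\<lambda>t. t + arctan (K t / (D t + d))) has_real_derivative
     1 + (K' * (D t + d) - K t * D') / ((D t + d)^2 + (K t)^2)) (at t)"
proof -
  have "((\<lambda>t. t + arctan (K t / (D t + d))) has_real_derivative
     1 + inverse (1 + (K t / (D t + d))^2) * ((K' * (D t + d) - K t * (D' + 0)) / ((D t + d) * (D t + d)))) (at t)"
    by (intro derivative_intros assms)
  moreover have "inverse (1 + (K t / (D t + d))^2) * ((K' * (D t + d) - K t * (D' + 0)) / ((D t + d) * (D t + d)))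
      = (K' * (D t + d) - K t * D') / ((D t + d)^2 + (K t)^2)"
  proof -
    define M where "M = D t + d"
    have M0: "M \<noteq> 0" using assms(3) M_def by simp
    have pos: "M^2 + (K t)^2 > 0" using M0 by (simp add: add_pos_nonneg)
    have "1 + (K t / M)^2 = (M^2 + (K t)^2) / M^2" using M0 by (simp add: field_simps)
    then have "inverse (1 + (K t / M)^2) = M^2 / (M^2 + (K t)^2)" by simp
    then have "inverse (1 + (K t / M)^2) * ((K' * M - K t * (D' + 0)) / (M * M))
       = M^2 / (M^2 + (K t)^2) * ((K' * M - K t * D') / (M * M))" by simp
    also have "\<dots> = (K' * M - K t * D') / (M^2 + (K t)^2)"
      using M0 pos by (simp add: power2_eq_square)
    finally show ?thesis unfolding M_def .
  qed
  ultimately show ?thesis by simp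
qed

lemma Gf_deriv: assumes "d > 0" shows "(Gf e d has_real_derivative d / Dn e d t) (at t)"
proof -
  define s c where "s = sin t" and "c = cos t"
  have sc: "s^2 + c^2 = 1" unfolding s_def c_def by simp
  have Dp: "Dn e d t > 0" using Dn_pos assms by blast
  have "(Gf e d has_real_derivative
     1 + ((-4 * e * sin t * cos t + (1-(d^2 + e^2)) * ((cos t)^2 - (sin t)^2)) * (Dn e d t + d)
        - Kf e d t * (2 * sin t * cos t + 2 * e * ((cos t)^2 - (sin t)^2) - 2 * (d^2 + e^2) * cos t * sin t))
       / ((Dn e d t + d)^2 + (Kf e d t)^2)) (at t)"
    unfolding Gf_def[abs_def]
    by (rule G_deriv_gen[OF Dn_deriv Kf_deriv]) (use Dp assms in simp)
  moreover have "1 + ((-4 * e * sin t * cos t + (1-(d^2 + e^2)) * ((cos t)^2 - (sin t)^2)) * (Dn e d t + d)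
        - Kf e d t * (2 * sin t * cos t + 2 * e * ((cos t)^2 - (sin t)^2) - 2 * (d^2 + e^2) * cos t * sin t))
       / ((Dn e d t + d)^2 + (Kf e d t)^2) = d / Dn e d t"
  proof -
    define T where "T = (d^2 + e^2)+1+2 * d"
    have Tp: "T > 0" unfolding T_def using assms by (smt (verit) zero_le_power2)
    have Dsc: "Dn e d t = s^2 + 2 * e * s * c + (d^2 + e^2) * c^2" unfolding Dn_def s_def c_def by simp
    have Ksc: "Kf e d t = e * (c^2 - s^2) + (1-(d^2 + e^2)) * s * c" unfolding Kf_def s_def c_def by simp
    have i1: "(Dn e d t + d)^2 + (Kf e d t)^2 = T * Dn e d t"
      using key_identity1[where s=s and c=c and e=e and d=d] unfolding T_def Dsc Ksc sc by simp
    have i2: "T * Dn e d t + ((-4 * e * sin t * cos t + (1-(d^2 + e^2)) * ((cos t)^2 - (sin t)^2)) * (Dn e d t + d)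
        - Kf e d t * (2 * sin t * cos t + 2 * e * ((cos t)^2 - (sin t)^2) - 2 * (d^2 + e^2) * cos t * sin t))
        = d * T"
      using key_identity2[where s=s and c=c and e=e and d=d] unfolding T_def Dsc Ksc sc s_def[symmetric] c_def[symmetric] by (simp add: mult.commute mult.left_commute)
    show ?thesis unfolding i1 using Tp Dp i2 by (simp add: field_simps)
  qed
  ultimately show ?thesis by simp
qed


lemma Gf_periodic: "Gf e d (2 * pi) = Gf e d 0 + 2 * pi"
  unfolding Gf_def Kf_def Dn_def by simp

lemma int_g2_ed: assumes "d > 0"
  shows "((\<lambda>t. 1 / Dn e d t) has_integral (2 * pi / d)) {0..2 * pi}"
proof -
  have "((\<lambda>t. 1 / Dn e d t) has_integral ((\<lambda>t. Gf e d t / d) (2 * pi) - (\<lambda>t. Gf e d t / d) 0)) {0..2 * pi}"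
  proof (rule fundamental_theorem_of_calculus)
    fix x :: real
    have "((\<lambda>t. Gf e d t / d) has_real_derivative (d / Dn e d x) / d) (at x)"
      by (rule DERIV_cdivide[OF Gf_deriv[OF assms]])
    moreover have "(d / Dn e d x) / d = 1 / Dn e d x" using assms by simp
    ultimately show "((\<lambda>t. Gf e d t / d) has_vector_derivative 1 / Dn e d x) (at x within {0..2 * pi})"
      by (simp add: has_real_derivative_iff_has_vector_derivative[symmetric] has_field_derivative_at_within)
  qed simp
  moreover have "(\<lambda>t. Gf e d t / d) (2 * pi) - (\<lambda>t. Gf e d t / d) 0 = 2 * pi / d"
    using Gf_periodic[of e d] by (simp add: diff_divide_distrib[symmetric])
  ultimately show ?thesis by simp
qed

lemma int_g1_ed: assumes "d > 0"
  shows "((\<lambda>t. (cos t * (sin t + 2 * e * cos t) - (d^2 + e^2) * cos t * sin t) / Dn e d t)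
     has_integral (2 * pi * e / d)) {0..2 * pi}"
proof -
  define H where "H t = ln (Dn e d t) / 2 + (e / d) * Gf e d t" for t
  have "((\<lambda>t. (cos t * (sin t + 2 * e * cos t) - (d^2 + e^2) * cos t * sin t) / Dn e d t)
      has_integral (H (2 * pi) - H 0)) {0..2 * pi}"
  proof (rule fundamental_theorem_of_calculus)
    fix x :: real
    have Dp: "Dn e d x > 0" using Dn_pos assms by blast
    have l: "((\<lambda>t. ln (Dn e d t)) has_real_derivative (1 / Dn e d x) *
        (2 * sin x * cos x + 2 * e * ((cos x)^2 - (sin x)^2) - 2 * (d^2 + e^2) * cos x * sin x)) (at x)"
      by (rule DERIV_chain2[OF DERIV_ln_divide[OF Dp] Dn_deriv])
    have "(H has_real_derivative
        (1 / Dn e d x) * (2 * sin x * cos x + 2 * e * ((cos x)^2 - (sin x)^2) - 2 * (d^2 + e^2) * cos x * sin x) / 2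
         + (e / d) * (d / Dn e d x)) (at x)"
      unfolding H_def[abs_def]
      by (rule DERIV_add[OF DERIV_cdivide[OF l] DERIV_cmult[OF Gf_deriv[OF assms]]])
    moreover have "(1 / Dn e d x) * (2 * sin x * cos x + 2 * e * ((cos x)^2 - (sin x)^2) - 2 * (d^2 + e^2) * cos x * sin x) / 2
         + (e / d) * (d / Dn e d x) = (cos x * (sin x + 2 * e * cos x) - (d^2 + e^2) * cos x * sin x) / Dn e d x"
    proof -
      have sc: "(sin x)^2 = 1 - (cos x)^2" by (simp add: sin_squared_eq)
      show ?thesis using Dp assms by (simp add: field_simps sc) (simp add: algebra_simps power2_eq_square)
    qed
    ultimately show "(H has_vector_derivative (cos x * (sin x + 2 * e * cos x) - (d^2 + e^2) * cos x * sin x) / Dn e d x) (at x within {0..2 * pi})"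
      by (simp add: has_real_derivative_iff_has_vector_derivative[symmetric] has_field_derivative_at_within)
  qed simp
  moreover have "H (2 * pi) - H 0 = 2 * pi * e / d"
    unfolding H_def using Gf_periodic[of e d] assms by (simp add: Dn_def field_simps)
  ultimately show ?thesis by simp
qed


definition DF :: "real \<Rightarrow> real \<Rightarrow> real \<Rightarrow> real" where
  "DF A B t = (sin t)^2 + B * sin t * cos t + A * (cos t)^2"
definition g1 :: "real \<Rightarrow> real \<Rightarrow> real \<Rightarrow> real" where
  "g1 A B t = (cos t * (sin t + B * cos t) - A * cos t * sin t) / DF A B t"
definition g2 :: "real \<Rightarrow> real \<Rightarrow> real \<Rightarrow> real" where
  "g2 A B t = 1 / DF A B t"

lemma DF_pos: assumes "4 * A - B^2 > 0" shows "DF A B t > 0"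
proof -
  define d where "d = sqrt (4 * A - B^2) / 2"
  have dp: "d > 0" unfolding d_def using assms by simp
  have "d^2 = (4 * A - B^2) / 4" unfolding d_def using assms by (simp add: power_divide)
  then have "A = d^2 + (B/2)^2" by (simp add: power_divide)
  then have "DF A B t = Dn (B/2) d t" unfolding DF_def Dn_def by simp
  then show ?thesis using Dn_pos[OF dp] by simp
qed

lemma int_g:
  assumes "4 * A - B^2 > 0"
  shows "(g1 A B has_integral 2 * pi * (B / sqrt (4 * A - B^2))) {0..2 * pi}"
    and "(g2 A B has_integral 2 * pi * (2 / sqrt (4 * A - B^2))) {0..2 * pi}"
proof -
  define d where "d = sqrt (4 * A - B^2) / 2"
  define e where "e = B / 2"
  have dp: "d > 0" unfolding d_def using assms by simp
  have "d^2 = (4 * A - B^2) / 4" unfolding d_def using assms by (simp add: power_divide)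
  then have A: "A = d^2 + e^2" unfolding e_def by (simp add: power_divide)
  have B: "B = 2 * e" unfolding e_def by simp
  have sq: "sqrt (4 * A - B^2) = 2 * d" unfolding d_def by simp
  have DFe: "DF A B = Dn e d" unfolding DF_def Dn_def A B by (auto simp: algebra_simps)
  have "g1 A B = (\<lambda>t. (cos t * (sin t + 2 * e * cos t) - (d^2 + e^2) * cos t * sin t) / Dn e d t)"
    unfolding g1_def DFe by (simp add: A B)
  moreover have "2 * pi * (B / sqrt (4 * A - B^2)) = 2 * pi * e / d" unfolding sq using dp by (simp add: B)
  ultimately show "(g1 A B has_integral 2 * pi * (B / sqrt (4 * A - B^2))) {0..2 * pi}"
    using int_g1_ed[OF dp, of e] by simp
  have "g2 A B = (\<lambda>t. 1 / Dn e d t)" unfolding g2_def DFe by simp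
  moreover have "2 * pi * (2 / sqrt (4 * A - B^2)) = 2 * pi / d" unfolding sq using dp by simp
  ultimately show "(g2 A B has_integral 2 * pi * (2 / sqrt (4 * A - B^2))) {0..2 * pi}"
    using int_g2_ed[OF dp, of e] by simp
qed

lemma ainv_eq:
  assumes "p1^2 - b * p1 * p2 + a * p2^2 \<noteq> 0"
  shows "ainv a b (p1, p2) = ((p1 - b * p2) / (p1^2 - b * p1 * p2 + a * p2^2),
                               - p2 / (p1^2 - b * p1 * p2 + a * p2^2))"
proof -
  define N where "N = p1^2 - b * p1 * p2 + a * p2^2"
  have N0: "N \<noteq> 0" using assms N_def by simp
  show ?thesis
    unfolding ainv_def N_def[symmetric]
  proof (rule the_equality)
    have n1: "p1 * (p1 - b * p2) + a * p2 * p2 = N" by (simp add: N_def algebra_simps power2_eq_square)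
    have c1: "p1 * ((p1 - b * p2) / N) - a * p2 * (- p2 / N) = 1"
    proof -
      have "p1 * ((p1 - b * p2) / N) - a * p2 * (- p2 / N) = (p1 * (p1 - b * p2) + a * p2 * p2) / N"
        using N0 by (simp add: field_simps)
      then show ?thesis using n1 N0 by simp
    qed
    have c2: "p1 * (- p2 / N) + p2 * ((p1 - b * p2) / N) - b * p2 * (- p2 / N) = 0"
      using N0 by (simp add: field_simps)
    show "amult a b (p1, p2) ((p1 - b * p2) / N, - p2 / N) = (1, 0)"
      unfolding amult_def using c1 c2 by simp
  next
    fix w assume "amult a b (p1, p2) w = (1, 0)"
    then have e1: "p1 * fst w - a * p2 * snd w = 1" and e2: "p1 * snd w + p2 * fst w - b * p2 * snd w = 0"
      unfolding amult_def by auto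
    have "N * snd w = - p2"
    proof -
      have "N * snd w = p1 * (p1 * snd w + p2 * fst w - b * p2 * snd w) - p2 * (p1 * fst w - a * p2 * snd w)"
        unfolding N_def by (simp add: algebra_simps power2_eq_square)
      then show ?thesis using e1 e2 by simp
    qed
    moreover have "N * fst w = p1 - b * p2"
    proof -
      have "N * fst w = (p1 - b * p2) * (p1 * fst w - a * p2 * snd w) + a * p2 * (p1 * snd w + p2 * fst w - b * p2 * snd w)"
        unfolding N_def by (simp add: algebra_simps power2_eq_square)
      then show ?thesis using e1 e2 by simp
    qed
    ultimately show "w = ((p1 - b * p2) / N, - p2 / N)" using N0
      by (metis nonzero_mult_div_cancel_left prod.collapse)
  qed
qed

lemma circ_dist: "dist \<zeta> (circ \<zeta> r t) = \<bar>r\<bar>"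
proof -
  obtain x y where z: "\<zeta> = (x, y)" by (cases \<zeta>)
  have "dist \<zeta> (circ \<zeta> r t) = sqrt ((r * cos t)^2 + (r * sin t)^2)"
    unfolding z circ_def by (simp add: dist_Pair_Pair dist_real_def)
  also have "(r * cos t)^2 + (r * sin t)^2 = r^2"
    by (simp add: power_mult_distrib algebra_simps flip: distrib_left)
  finally show ?thesis by simp
qed

lemma circ_int_eq:
  assumes "r \<noteq> 0" and pos: "\<And>t. 4 * \<alpha> (circ \<zeta> r t) - (\<beta> (circ \<zeta> r t))^2 > 0"
  shows "circ_int \<alpha> \<beta> \<zeta> r (\<lambda>z. ainv (\<alpha> z) (\<beta> z) (Zfun z \<zeta>)) =
     (integral {0..2 * pi} (\<lambda>t. g1 (\<alpha> (circ \<zeta> r t)) (\<beta> (circ \<zeta> r t)) t),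
      integral {0..2 * pi} (\<lambda>t. g2 (\<alpha> (circ \<zeta> r t)) (\<beta> (circ \<zeta> r t)) t))"
proof -
  have pt: "ainv (\<alpha> (circ \<zeta> r t)) (\<beta> (circ \<zeta> r t)) (Zfun (circ \<zeta> r t) \<zeta>)
     = ((r * sin t + \<beta> (circ \<zeta> r t) * (r * cos t)) / (r^2 * DF (\<alpha> (circ \<zeta> r t)) (\<beta> (circ \<zeta> r t)) t),
        r * cos t / (r^2 * DF (\<alpha> (circ \<zeta> r t)) (\<beta> (circ \<zeta> r t)) t))" for t
  proof -
    define A B where "A = \<alpha> (circ \<zeta> r t)" and "B = \<beta> (circ \<zeta> r t)"
    have Dp: "DF A B t > 0" using DF_pos pos A_def B_def by blast
    have Z: "Zfun (circ \<zeta> r t) \<zeta> = (r * sin t, - (r * cos t))" unfolding Zfun_def circ_def by simp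
    have N: "(r * sin t)^2 - B * (r * sin t) * (- (r * cos t)) + A * (- (r * cos t))^2 = r^2 * DF A B t"
      unfolding DF_def by (simp add: algebra_simps power2_eq_square)
    have "r^2 * DF A B t \<noteq> 0" using Dp assms(1) by simp
    then show ?thesis unfolding A_def[symmetric] B_def[symmetric] Z
      using ainv_eq[of "r * sin t" B "- (r * cos t)" A] unfolding N by simp
  qed
  have i1: "(\<lambda>t. ((r * sin t + \<beta> (circ \<zeta> r t) * (r * cos t)) / (r^2 * DF (\<alpha> (circ \<zeta> r t)) (\<beta> (circ \<zeta> r t)) t)) * (r * cos t)
       + (r * cos t / (r^2 * DF (\<alpha> (circ \<zeta> r t)) (\<beta> (circ \<zeta> r t)) t)) * \<alpha> (circ \<zeta> r t) * (- r * sin t))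
     = (\<lambda>t. g1 (\<alpha> (circ \<zeta> r t)) (\<beta> (circ \<zeta> r t)) t)"
  proof
    fix t
    define A B where "A = \<alpha> (circ \<zeta> r t)" and "B = \<beta> (circ \<zeta> r t)"
    have Dp: "DF A B t > 0" using DF_pos pos A_def B_def by blast
    show "((r * sin t + \<beta> (circ \<zeta> r t) * (r * cos t)) / (r^2 * DF (\<alpha> (circ \<zeta> r t)) (\<beta> (circ \<zeta> r t)) t)) * (r * cos t)
       + (r * cos t / (r^2 * DF (\<alpha> (circ \<zeta> r t)) (\<beta> (circ \<zeta> r t)) t)) * \<alpha> (circ \<zeta> r t) * (- r * sin t)
       = g1 (\<alpha> (circ \<zeta> r t)) (\<beta> (circ \<zeta> r t)) t"
      unfolding A_def[symmetric] B_def[symmetric] g1_def using Dp assms(1)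
      by (simp add: field_simps power2_eq_square)
  qed
  have i2: "(\<lambda>t. (r * cos t / (r^2 * DF (\<alpha> (circ \<zeta> r t)) (\<beta> (circ \<zeta> r t)) t)) * (r * cos t)
       - ((r * sin t + \<beta> (circ \<zeta> r t) * (r * cos t)) / (r^2 * DF (\<alpha> (circ \<zeta> r t)) (\<beta> (circ \<zeta> r t)) t)) * (- r * sin t)
       + (r * cos t / (r^2 * DF (\<alpha> (circ \<zeta> r t)) (\<beta> (circ \<zeta> r t)) t)) * \<beta> (circ \<zeta> r t) * (- r * sin t))
     = (\<lambda>t. g2 (\<alpha> (circ \<zeta> r t)) (\<beta> (circ \<zeta> r t)) t)"
  proof
    fix t
    define A B where "A = \<alpha> (circ \<zeta> r t)" and "B = \<beta> (circ \<zeta> r t)"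
    have Dp: "DF A B t > 0" using DF_pos pos A_def B_def by blast
    have sc: "(sin t)^2 + (cos t)^2 = 1" by simp
    have X: "(r * cos t / (r^2 * DF A B t)) * (r * cos t)
       - ((r * sin t + B * (r * cos t)) / (r^2 * DF A B t)) * (- r * sin t)
       + (r * cos t / (r^2 * DF A B t)) * B * (- r * sin t)
       = g2 A B t"
    proof -
      have cc: "cos t * cos t = 1 - sin t * sin t" using sc by (simp add: power2_eq_square)
      show ?thesis unfolding g2_def using Dp assms(1) by (simp add: field_simps power2_eq_square cc)
    qed
    from X show "(r * cos t / (r^2 * DF (\<alpha> (circ \<zeta> r t)) (\<beta> (circ \<zeta> r t)) t)) * (r * cos t)
       - ((r * sin t + \<beta> (circ \<zeta> r t) * (r * cos t)) / (r^2 * DF (\<alpha> (circ \<zeta> r t)) (\<beta> (circ \<zeta> r t)) t)) * (- r * sin t)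
       + (r * cos t / (r^2 * DF (\<alpha> (circ \<zeta> r t)) (\<beta> (circ \<zeta> r t)) t)) * \<beta> (circ \<zeta> r t) * (- r * sin t)
       = g2 (\<alpha> (circ \<zeta> r t)) (\<beta> (circ \<zeta> r t)) t"
      unfolding A_def B_def .
  qed
  show ?thesis
    unfolding circ_int_def Let_def pt fst_conv snd_conv i1 i2 ..
qed

theorem lemma5p7:
  fixes \<Omega> :: "(real \<times> real) set"
    and \<alpha> \<beta> \<alpha>x \<alpha>y \<beta>x \<beta>y :: "real \<times> real \<Rightarrow> real"
    and \<zeta> :: "real \<times> real"
  assumes "open \<Omega>"
    and "\<And>z. z \<in> \<Omega> \<Longrightarrow> (\<alpha> has_derivative (\<lambda>(h, k). \<alpha>x z * h + \<alpha>y z * k)) (at z)"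
    and "\<And>z. z \<in> \<Omega> \<Longrightarrow> (\<beta> has_derivative (\<lambda>(h, k). \<beta>x z * h + \<beta>y z * k)) (at z)"
    and "continuous_on \<Omega> \<alpha>x" "continuous_on \<Omega> \<alpha>y"
    and "continuous_on \<Omega> \<beta>x" "continuous_on \<Omega> \<beta>y"
    and "\<And>z. z \<in> \<Omega> \<Longrightarrow> 4 * \<alpha> z - (\<beta> z)\<^sup>2 > 0"
    and "rigid \<Omega> \<alpha> \<beta> \<alpha>x \<alpha>y \<beta>x \<beta>y"
    and "\<zeta> \<in> \<Omega>"
  shows "((\<lambda>r. circ_int \<alpha> \<beta> \<zeta> r (\<lambda>z. ainv (\<alpha> z) (\<beta> z) (Zfun z \<zeta>)))
            \<longlongrightarrow> (2 * pi * (\<beta> \<zeta> / sqrt (4 * \<alpha> \<zeta> - (\<beta> \<zeta>)\<^sup>2)),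
                 2 * pi * (2 / sqrt (4 * \<alpha> \<zeta> - (\<beta> \<zeta>)\<^sup>2)))) (at_right 0)"
  proof -
  note Om = assms(1) and da = assms(2) and db = assms(3) and pos = assms(8) and zin = assms(10)
  obtain e0 where e0: "e0 > 0" "cball \<zeta> e0 \<subseteq> \<Omega>"
    using open_contains_cball Om zin by blast
  define U where "U = cball (0::real) e0"
  define T where "T = {0..2 * pi}"
  have circ_in: "circ \<zeta> r t \<in> \<Omega>" if "r \<in> U" for r t
  proof -
    have "dist \<zeta> (circ \<zeta> r t) \<le> e0" using that unfolding circ_dist U_def by simp
    then show ?thesis using e0(2) by auto
  qed
  have ca: "continuous_on \<Omega> \<alpha>"
    by (rule continuous_at_imp_continuous_on) (use da has_derivative_continuous in blast)
  have cb: "continuous_on \<Omega> \<beta>"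
    by (rule continuous_at_imp_continuous_on) (use db has_derivative_continuous in blast)
  have cc: "continuous_on (U \<times> T) (\<lambda>p. circ \<zeta> (fst p) (snd p))"
    unfolding circ_def by (intro continuous_intros)
  have img: "(\<lambda>p. circ \<zeta> (fst p) (snd p)) ` (U \<times> T) \<subseteq> \<Omega>" using circ_in by auto
  have caa: "continuous_on (U \<times> T) (\<lambda>p. \<alpha> (circ \<zeta> (fst p) (snd p)))"
    by (rule continuous_on_compose2[OF ca cc img])
  have cbb: "continuous_on (U \<times> T) (\<lambda>p. \<beta> (circ \<zeta> (fst p) (snd p)))"
    by (rule continuous_on_compose2[OF cb cc img])
  have DFne: "DF (\<alpha> (circ \<zeta> (fst p) (snd p))) (\<beta> (circ \<zeta> (fst p) (snd p))) (snd p) \<noteq> 0"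
    if "p \<in> U \<times> T" for p
  proof -
    have "fst p \<in> U" using that by auto
    then have "circ \<zeta> (fst p) (snd p) \<in> \<Omega>" by (rule circ_in)
    then show ?thesis using DF_pos pos by (metis less_irrefl)
  qed
  have cg1: "continuous_on (U \<times> T) (\<lambda>(r, t). g1 (\<alpha> (circ \<zeta> r t)) (\<beta> (circ \<zeta> r t)) t)"
  proof -
    have "continuous_on (U \<times> T) (\<lambda>p. g1 (\<alpha> (circ \<zeta> (fst p) (snd p))) (\<beta> (circ \<zeta> (fst p) (snd p))) (snd p))"
      unfolding g1_def DF_def
      by (intro continuous_intros caa cbb) (use DFne in \<open>auto simp: DF_def\<close>)
    then show ?thesis by (simp add: case_prod_beta')
  qed
  have cg2: "continuous_on (U \<times> T) (\<lambda>(r, t). g2 (\<alpha> (circ \<zeta> r t)) (\<beta> (circ \<zeta> r t)) t)"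
  proof -
    have "continuous_on (U \<times> T) (\<lambda>p. g2 (\<alpha> (circ \<zeta> (fst p) (snd p))) (\<beta> (circ \<zeta> (fst p) (snd p))) (snd p))"
      unfolding g2_def DF_def
      by (intro continuous_intros caa cbb) (use DFne in \<open>auto simp: DF_def\<close>)
    then show ?thesis by (simp add: case_prod_beta')
  qed
  define P1 where "P1 r = integral {0..2 * pi} (\<lambda>t. g1 (\<alpha> (circ \<zeta> r t)) (\<beta> (circ \<zeta> r t)) t)" for r
  define P2 where "P2 r = integral {0..2 * pi} (\<lambda>t. g2 (\<alpha> (circ \<zeta> r t)) (\<beta> (circ \<zeta> r t)) t)" for r
  have T': "T = cbox 0 (2 * pi)" unfolding T_def by simp
  have cP1: "continuous_on U P1"
    unfolding P1_def using integral_continuous_on_param[OF cg1[unfolded T']] by simp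
  have cP2: "continuous_on U P2"
    unfolding P2_def using integral_continuous_on_param[OF cg2[unfolded T']] by simp
  have int0: "0 \<in> interior U" unfolding U_def using e0 by simp
  have circ0: "circ \<zeta> 0 t = \<zeta>" for t unfolding circ_def by simp
  have pz: "4 * \<alpha> \<zeta> - (\<beta> \<zeta>)^2 > 0" using pos zin by blast
  have P10: "P1 0 = 2 * pi * (\<beta> \<zeta> / sqrt (4 * \<alpha> \<zeta> - (\<beta> \<zeta>)\<^sup>2))"
    unfolding P1_def circ0 using int_g(1)[OF pz] by (simp add: integral_unique)
  have P20: "P2 0 = 2 * pi * (2 / sqrt (4 * \<alpha> \<zeta> - (\<beta> \<zeta>)\<^sup>2))"
    unfolding P2_def circ0 using int_g(2)[OF pz] by (simp add: integral_unique)
  have l1: "(P1 \<longlongrightarrow> P1 0) (at_right 0)"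
    using continuous_on_interior[OF cP1 int0] unfolding isCont_def
    by (rule tendsto_within_subset) simp
  have l2: "(P2 \<longlongrightarrow> P2 0) (at_right 0)"
    using continuous_on_interior[OF cP2 int0] unfolding isCont_def
    by (rule tendsto_within_subset) simp
  have lim: "((\<lambda>r. (P1 r, P2 r)) \<longlongrightarrow> (P1 0, P2 0)) (at_right 0)"
    by (rule tendsto_Pair[OF l1 l2])
  have ev: "eventually (\<lambda>r. (P1 r, P2 r) = circ_int \<alpha> \<beta> \<zeta> r (\<lambda>z. ainv (\<alpha> z) (\<beta> z) (Zfun z \<zeta>))) (at_right 0)"
    unfolding eventually_at_right_field
  proof (intro exI[of _ e0] conjI allI impI)
    show "0 < e0" by (rule e0)
    fix r :: real assume r: "0 < r" "r < e0"
    then have rU: "r \<in> U" unfolding U_def by simp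
    have "circ_int \<alpha> \<beta> \<zeta> r (\<lambda>z. ainv (\<alpha> z) (\<beta> z) (Zfun z \<zeta>)) = (P1 r, P2 r)"
      unfolding P1_def P2_def
      by (rule circ_int_eq) (use r pos circ_in[OF rU] in auto)
    then show "(P1 r, P2 r) = circ_int \<alpha> \<beta> \<zeta> r (\<lambda>z. ainv (\<alpha> z) (\<beta> z) (Zfun z \<zeta>))" by simp
  qed
  show ?thesis
    using Lim_transform_eventually[OF lim ev] unfolding P10 P20 .
qed

end
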